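(* The set $\{S_1 : S\in\mathrm{OW}_n(\mathbb{C})\}$ of first slices of symmetric tensors in $\mathrm{OW}_n(\mathbb{C})$ is dense (in the Euclidean topology) in the space of complex symmetric $n\times n$ matrices.
   Context: For a symmetric tensor $S\in\mathbb{C}^{n\times n\times n}$ the first slice is $S_1=(S_{ij1})_{1\le i,j\le n}$. Tensors are identified with cubic forms $f=\sum_{i,j,k}S_{ijk}x_ix_jx_k$. $\mathrm{OW}_n(\mathbb{C})$ is the set of $f\in\mathbb{C}[x_1,\dots,x_n]_3$ that can be written $f(x)=g(Ax)$ with $A\in M_n(\mathbb{C})$, $A^TA=\mathrm{Id}$, and $g=\alpha_1x_1^3+\cdots+\alpha_nx_n^3$. *)

theory Defs
  imports "HOL-Analysis.Analysis"
begin

text \<open>Third-order tensors complex^n^n^n, indexed by a finite (well-ordered) type 'n;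
  S $ i $ j $ k is the entry S_{ijk}.\<close>

definition symmetric_tensor :: "complex ^ ('n::finite) ^ 'n ^ 'n \<Rightarrow> bool" where
  "symmetric_tensor S \<longleftrightarrow>
     (\<forall>i j k. S $ i $ j $ k = S $ j $ i $ k \<and> S $ i $ j $ k = S $ i $ k $ j)"

definition cubic_form :: "complex ^ ('n::finite) ^ 'n ^ 'n \<Rightarrow> complex ^ 'n \<Rightarrow> complex" where
  "cubic_form S x = (\<Sum>i\<in>UNIV. \<Sum>j\<in>UNIV. \<Sum>k\<in>UNIV. S $ i $ j $ k * x $ i * x $ j * x $ k)"

definition OW :: "(complex ^ ('n::finite) ^ 'n ^ 'n) set" where
  "OW = {S. symmetric_tensor S \<and>
           (\<exists>(A :: complex ^ 'n ^ 'n) (\<alpha> :: 'n \<Rightarrow> complex).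
              transpose A ** A = mat 1 \<and>
              (\<forall>x. cubic_form S x = (\<Sum>i\<in>UNIV. \<alpha> i * ((A *v x) $ i) ^ 3)))}"

text \<open>The first slice S_1 = (S_{ij1})_{i,j}; "1" is the least index of 'n.\<close>
definition first_slice :: "complex ^ ('n::{finite,wellorder}) ^ ('n::{finite,wellorder}) ^ ('n::{finite,wellorder}) \<Rightarrow> complex ^ ('n::{finite,wellorder}) ^ ('n::{finite,wellorder})" where
  "first_slice S = (\<chi> i j. S $ i $ j $ (LEAST k. True))"

end

theory Submission imports Defs "Jordan_Normal_Form.Jordan_Normal_Form" "Subresultants.Subresultant_Gcd" "HOL-Computational_Algebra.Field_as_Ring" begin


lemma eigen_fun:
  fixes B :: "complex mat"
  assumes B: "B \<in> carrier_mat n n" and ev: "eigenvalue B k"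
  shows "\<exists>v. (\<forall>i<n. (\<Sum>j<n. B $$ (i,j) * v j) = k * v i) \<and> (\<exists>i<n. v i \<noteq> 0)"
proof -
  from ev obtain v where v: "v \<in> carrier_vec n" "v \<noteq> 0\<^sub>v n" "B *\<^sub>v v = k \<cdot>\<^sub>v v"
    unfolding eigenvalue_def eigenvector_def using B by auto
  have "\<forall>i<n. (\<Sum>j<n. B $$ (i,j) * v $ j) = k * v $ i"
  proof (intro allI impI)
    fix i assume i: "i < n"
    have "(B *\<^sub>v v) $ i = (\<Sum>j<n. B $$ (i,j) * v $ j)"
      using i B v(1) by (simp add: scalar_prod_def lessThan_atLeast0)
    moreover have "(k \<cdot>\<^sub>v v) $ i = k * v $ i" using i v by simp
    ultimately show "(\<Sum>j<n. B $$ (i,j) * v $ j) = k * v $ i" using v(3) by simp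
  qed
  moreover have "\<exists>i<n. v $ i \<noteq> 0"
  proof (rule ccontr)
    assume "\<not> (\<exists>i<n. v $ i \<noteq> 0)"
    hence "v = 0\<^sub>v n" using v(1) by (intro eq_vecI) auto
    with v(2) show False by simp
  qed
  ultimately show ?thesis by (intro exI[of _ "\<lambda>j. v $ j"]) auto
qed

lemma eigen_fun_rev:
  fixes B :: "complex mat"
  assumes B: "B \<in> carrier_mat n n" and eq: "\<forall>i<n. (\<Sum>j<n. B $$ (i,j) * v j) = k * v i"
    and nz: "\<exists>i<n. v i \<noteq> 0"
  shows "eigenvalue B k"
  unfolding eigenvalue_def eigenvector_def
proof (intro exI[of _ "vec n v"] conjI)
  show "vec n v \<in> carrier_vec (dim_row B)" using B by simp
  show "vec n v \<noteq> 0\<^sub>v (dim_row B)" using B nz by (auto simp: vec_eq_iff)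
  show "B *\<^sub>v vec n v = k \<cdot>\<^sub>v vec n v"
  proof (rule eq_vecI)
    fix i assume "i < dim_vec (k \<cdot>\<^sub>v vec n v)"
    hence i: "i < n" by simp
    have "(B *\<^sub>v vec n v) $ i = (\<Sum>j<n. B $$ (i,j) * v j)"
      using i B by (simp add: scalar_prod_def lessThan_atLeast0)
    thus "(B *\<^sub>v vec n v) $ i = (k \<cdot>\<^sub>v vec n v) $ i" using eq i by simp
  qed (use B in simp)
qed

lemma eig_indep:
  fixes V :: "nat \<Rightarrow> nat \<Rightarrow> complex" and B :: "nat \<Rightarrow> nat \<Rightarrow> complex"
  assumes eq: "\<forall>l<n. \<forall>i<n. (\<Sum>j<n. B i j * V l j) = lam l * V l i"
    and nz: "\<forall>l<n. \<exists>i<n. V l i \<noteq> 0"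
    and inj: "inj_on lam {..<n}"
    and S: "S \<subseteq> {..<n}"
  shows "\<forall>c. (\<forall>i<n. (\<Sum>l\<in>S. c l * V l i) = 0) \<longrightarrow> (\<forall>l\<in>S. c l = 0)"
proof -
  have fin: "finite S" using S finite_subset by blast
  from fin S show ?thesis
  proof (induction S rule: finite_induct)
    case empty then show ?case by simp
  next
    case (insert a S)
    show ?case
    proof (intro allI impI)
      fix c assume H: "\<forall>i<n. (\<Sum>l\<in>insert a S. c l * V l i) = 0"
      have an: "a < n" using insert by auto
      have Sn: "S \<subseteq> {..<n}" using insert by auto
      have H2: "(\<Sum>l\<in>insert a S. c l * lam l * V l i) = 0" if i: "i < n" for i
      proof -
        have "(\<Sum>l\<in>insert a S. c l * lam l * V l i) = (\<Sum>l\<in>insert a S. c l * (\<Sum>j<n. B i j * V l j))"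
          using eq i insert.prems by (intro sum.cong) auto
        also have "\<dots> = (\<Sum>j<n. B i j * (\<Sum>l\<in>insert a S. c l * V l j))"
          unfolding sum_distrib_left by (subst sum.swap) (simp add: mult_ac)
        also have "\<dots> = 0" using H by simp
        finally show ?thesis .
      qed
      have H3: "(\<Sum>l\<in>S. (c l * (lam l - lam a)) * V l i) = 0" if i: "i < n" for i
      proof -
        have "(\<Sum>l\<in>insert a S. (c l * (lam l - lam a)) * V l i)
             = (\<Sum>l\<in>insert a S. c l * lam l * V l i) - lam a * (\<Sum>l\<in>insert a S. c l * V l i)"
          by (simp add: sum_distrib_left sum_subtractf algebra_simps)
        also have "\<dots> = 0" using H2[OF i] H i by simp
        finally show ?thesis using insert.hyps by simp
      qed
      have cS: "\<forall>l\<in>S. c l * (lam l - lam a) = 0"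
        using insert.IH[OF Sn, THEN spec, of "\<lambda>l. c l * (lam l - lam a)"] H3 by simp
      have cS0: "\<forall>l\<in>S. c l = 0"
      proof
        fix l assume l: "l \<in> S"
        have "lam l \<noteq> lam a" using inj_onD[OF inj, of l a] l an Sn insert.hyps(2) by auto
        thus "c l = 0" using cS l by auto
      qed
      have "\<forall>i<n. c a * V a i = 0"
      proof (intro allI impI)
        fix i assume "i < n"
        hence "c a * V a i + (\<Sum>l\<in>S. c l * V l i) = 0" using H insert.hyps by simp
        thus "c a * V a i = 0" using cS0 by simp
      qed
      hence "c a = 0" using nz an by auto
      thus "\<forall>l\<in>insert a S. c l = 0" using cS0 by simp
    qed
  qed
qed


lemma res_zero_iff:
  fixes p q :: "complex poly"
  assumes "p \<noteq> 0"
  shows "resultant p q = 0 \<longleftrightarrow> (\<exists>a. poly p a = 0 \<and> poly q a = 0)"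
proof
  assume "resultant p q = 0"
  hence d: "degree (gcd p q) \<noteq> 0" by (simp add: resultant_0_gcd)
  hence "\<not> constant (poly (gcd p q))" using constant_degree[of "gcd p q"] by simp
  then obtain z where "poly (gcd p q) z = 0"
    using fundamental_theorem_of_algebra by blast
  moreover have "gcd p q dvd p" "gcd p q dvd q" by auto
  ultimately show "\<exists>a. poly p a = 0 \<and> poly q a = 0"
    by (metis dvd_def mult_eq_0_iff poly_mult)
next
  assume "\<exists>a. poly p a = 0 \<and> poly q a = 0"
  then obtain a where a: "poly p a = 0" "poly q a = 0" by blast
  have "[:-a,1:] dvd p" "[:-a,1:] dvd q" using a by (auto simp: poly_eq_0_iff_dvd)
  hence "[:-a,1:] dvd gcd p q" by auto
  moreover have "gcd p q \<noteq> 0" using assms by auto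
  ultimately have "degree [:-a,1:] \<le> degree (gcd p q)" by (rule dvd_imp_degree_le)
  thus "resultant p q = 0" by (simp add: resultant_0_gcd)
qed

definition minor0 :: "'a mat \<Rightarrow> 'a mat" where
  "minor0 A = mat (dim_row A - 1) (dim_col A - 1) (\<lambda>(i,j). A $$ (Suc i, Suc j))"

lemma diag_core:
  fixes B :: "complex mat"
  assumes B: "B \<in> carrier_mat n n" and sym: "\<forall>i<n. \<forall>j<n. B $$ (i,j) = B $$ (j,i)"
    and r1: "resultant (char_poly B) (pderiv (char_poly B)) \<noteq> 0"
    and r2: "resultant (char_poly B) (char_poly (minor0 B)) \<noteq> 0"
  shows "\<exists>P lam. (\<forall>i<n. \<forall>j<n. (\<Sum>k<n. P k i * P k j) = (if i = j then 1 else 0))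
           \<and> (\<forall>l<n. P l 0 \<noteq> 0) \<and> (\<forall>i<n. \<forall>j<n. B $$ (i,j) = (\<Sum>l<n. lam l * P l i * P l j))"
proof -
  define cp where "cp = char_poly B"
  have dcp: "degree cp = n" "coeff cp n = 1" using degree_monic_char_poly[OF B] cp_def by auto
  have cp0: "cp \<noteq> 0" using dcp by auto
  have rsf: "rsquarefree cp"
    unfolding rsquarefree_roots using r1 res_zero_iff[OF cp0] cp_def by auto
  have card: "card {x. poly cp x = 0} = n" using rsquarefree_card_degree[OF cp0] rsf dcp by simp
  have fin: "finite {x. poly cp x = 0}" using poly_roots_finite[OF cp0] .
  obtain lam where lam: "bij_betw lam {0..<n} {x. poly cp x = 0}"
    using ex_bij_betw_nat_finite[OF fin] card by auto
  have inj: "inj_on lam {..<n}" using lam by (simp add: bij_betw_def lessThan_atLeast0)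
  have root: "poly cp (lam l) = 0" if "l < n" for l using lam that by (auto simp: bij_betw_def)
  have "\<forall>l<n. \<exists>v. (\<forall>i<n. (\<Sum>j<n. B $$ (i,j) * v j) = lam l * v i) \<and> (\<exists>i<n. v i \<noteq> 0)"
    using eigen_fun[OF B] eigenvalue_root_char_poly[OF B] root cp_def by auto
  then obtain V where V: "\<forall>l<n. (\<forall>i<n. (\<Sum>j<n. B $$ (i,j) * V l j) = lam l * V l i) \<and> (\<exists>i<n. V l i \<noteq> 0)"
    by metis
  have Veq: "(\<Sum>j<n. B $$ (i,j) * V l j) = lam l * V l i" if "l < n" "i < n" for l i
    using V that by auto
  have orth: "(\<Sum>i<n. V l i * V m i) = 0" if lm: "l < n" "m < n" "l \<noteq> m" for l m
  proof -
    have "lam l * (\<Sum>i<n. V l i * V m i) = (\<Sum>i<n. (\<Sum>j<n. B $$ (i,j) * V l j) * V m i)"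
      using Veq lm by (simp add: sum_distrib_left mult.assoc)
    also have "\<dots> = (\<Sum>j<n. V l j * (\<Sum>i<n. B $$ (j,i) * V m i))"
    proof -
      have "(\<Sum>i<n. (\<Sum>j<n. B $$ (i,j) * V l j) * V m i) = (\<Sum>i<n. \<Sum>j<n. V l j * (B $$ (j,i) * V m i))"
        apply (rule sum.cong[OF refl])
        apply (simp add: sum_distrib_right)
        apply (rule sum.cong[OF refl])
        subgoal for i j using sym[rule_format, of i j] by (simp add: mult_ac)
        done
      also have "\<dots> = (\<Sum>j<n. \<Sum>i<n. V l j * (B $$ (j,i) * V m i))" by (rule sum.swap)
      finally show ?thesis by (simp add: sum_distrib_left)
    qed
    also have "\<dots> = lam m * (\<Sum>i<n. V l i * V m i)"
      using Veq lm by (simp add: sum_distrib_left mult_ac)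
    finally have "(lam l - lam m) * (\<Sum>i<n. V l i * V m i) = 0" by (simp add: algebra_simps)
    moreover have "lam l \<noteq> lam m" using inj_onD[OF inj, of l m] lm by auto
    ultimately show ?thesis by simp
  qed
  have indep: "\<forall>c. (\<forall>i<n. (\<Sum>l<n. c l * V l i) = 0) \<longrightarrow> (\<forall>l<n. c l = 0)"
    using eig_indep[of n "\<lambda>i j. B $$ (i,j)" V lam "{..<n}"] V inj by auto
  have g: "(\<Sum>i<n. V l i * V l i) \<noteq> 0" if l: "l < n" for l
  proof
    assume g0: "(\<Sum>i<n. V l i * V l i) = 0"
    define W where "W = mat n n (\<lambda>(i,m). V m i)"
    have W: "W \<in> carrier_mat n n" by (simp add: W_def)
    have "Determinant.det W \<noteq> 0"
    proof
      assume "Determinant.det W = 0"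
      then obtain c where c: "c \<in> carrier_vec n" "c \<noteq> 0\<^sub>v n" "W *\<^sub>v c = 0\<^sub>v n"
        using det_0_iff_vec_prod_zero[OF W] by auto
      have "\<forall>i<n. (\<Sum>m<n. c $ m * V m i) = 0"
      proof (intro allI impI)
        fix i assume i: "i < n"
        have "(W *\<^sub>v c) $ i = (\<Sum>m<n. V m i * c $ m)"
          using i c(1) by (simp add: W_def scalar_prod_def lessThan_atLeast0)
        thus "(\<Sum>m<n. c $ m * V m i) = 0" using c(3) i by (simp add: mult.commute)
      qed
      hence "\<forall>m<n. c $ m = 0" using indep by auto
      hence "c = 0\<^sub>v n" using c(1) by (intro eq_vecI) auto
      with c(2) show False by simp
    qed
    hence "Determinant.det (transpose_mat W) \<noteq> 0" using det_transpose[OF W] by simp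
    moreover have "transpose_mat W *\<^sub>v vec n (V l) = 0\<^sub>v n"
    proof (rule eq_vecI)
      fix m assume "m < dim_vec (0\<^sub>v n)" hence m: "m < n" by simp
      have "(transpose_mat W *\<^sub>v vec n (V l)) $ m = (\<Sum>i<n. V m i * V l i)"
        using m by (simp add: W_def scalar_prod_def lessThan_atLeast0)
      also have "\<dots> = 0" using orth[of m l] g0 l m by (cases "m = l") auto
      finally show "(transpose_mat W *\<^sub>v vec n (V l)) $ m = 0\<^sub>v n $ m" using m by simp
    qed (simp add: W_def)
    moreover have "vec n (V l) \<noteq> 0\<^sub>v n" using V l by (auto simp: vec_eq_iff)
    moreover have "transpose_mat W \<in> carrier_mat n n" using W by simp
    ultimately show False using det_0_iff_vec_prod_zero[of "transpose_mat W" n] using vec_carrier[of n "V l"] by blast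
  qed
  define s where "s l = csqrt (\<Sum>i<n. V l i * V l i)" for l
  have s2: "s l * s l = (\<Sum>i<n. V l i * V l i)" for l
    unfolding s_def by (metis power2_csqrt power2_eq_square)
  have s0: "s l \<noteq> 0" if "l < n" for l using g[OF that] s2[of l] by auto
  define P where "P l i = V l i / s l" for l i
  have rows: "(\<Sum>i<n. P l i * P m i) = (if l = m then 1 else 0)" if lm: "l < n" "m < n" for l m
  proof -
    have "(\<Sum>i<n. P l i * P m i) = (\<Sum>i<n. V l i * V m i) / (s l * s m)"
      unfolding P_def by (simp add: sum_divide_distrib)
    thus ?thesis using orth[OF lm] s2[of l] s0[OF lm(1)] by auto
  qed
  define PM where "PM = mat n n (\<lambda>(l,i). P l i)"
  have PM: "PM \<in> carrier_mat n n" "transpose_mat PM \<in> carrier_mat n n" by (auto simp: PM_def)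
  have "PM * transpose_mat PM = 1\<^sub>m n"
  proof (rule eq_matI)
    fix l m assume "l < dim_row (1\<^sub>m n)" "m < dim_col (1\<^sub>m n)"
    hence lm: "l < n" "m < n" by auto
    have "(PM * transpose_mat PM) $$ (l,m) = (\<Sum>i<n. P l i * P m i)"
      using lm by (simp add: PM_def scalar_prod_def lessThan_atLeast0)
    thus "(PM * transpose_mat PM) $$ (l,m) = 1\<^sub>m n $$ (l,m)" using rows[OF lm] lm by simp
  qed (auto simp: PM_def)
  hence "transpose_mat PM * PM = 1\<^sub>m n" using mat_mult_left_right_inverse[OF PM] by simp
  have cols: "(\<Sum>k<n. P k i * P k j) = (if i = j then 1 else 0)" if ij: "i < n" "j < n" for i j
  proof -
    have "(\<Sum>k<n. P k i * P k j) = (transpose_mat PM * PM) $$ (i,j)"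
      using ij by (simp add: PM_def scalar_prod_def lessThan_atLeast0)
    also have "\<dots> = (if i = j then 1 else 0)" using \<open>transpose_mat PM * PM = 1\<^sub>m n\<close> ij by simp
    finally show ?thesis .
  qed
  have Peq: "(\<Sum>k<n. B $$ (i,k) * P l k) = lam l * P l i" if "l < n" "i < n" for l i
    using Veq[OF that] unfolding P_def by (simp add: sum_divide_distrib[symmetric] mult.assoc)
  have recon: "B $$ (i,j) = (\<Sum>l<n. lam l * P l i * P l j)" if ij: "i < n" "j < n" for i j
  proof -
    have "(\<Sum>l<n. lam l * P l i * P l j) = (\<Sum>l<n. (\<Sum>k<n. B $$ (i,k) * P l k) * P l j)"
      using Peq ij by simp
    also have "\<dots> = (\<Sum>k<n. B $$ (i,k) * (\<Sum>l<n. P l k * P l j))"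
    proof -
      have "(\<Sum>l<n. (\<Sum>k<n. B $$ (i,k) * P l k) * P l j) = (\<Sum>l<n. \<Sum>k<n. B $$ (i,k) * (P l k * P l j))"
        by (simp add: sum_distrib_right sum_distrib_left mult_ac)
      also have "\<dots> = (\<Sum>k<n. \<Sum>l<n. B $$ (i,k) * (P l k * P l j))" by (rule sum.swap)
      finally show ?thesis by (simp add: sum_distrib_left)
    qed
    also have "\<dots> = (\<Sum>k<n. B $$ (i,k) * (if k = j then 1 else 0))"
      using cols ij by simp
    also have "\<dots> = B $$ (i,j)" using ij by (simp add: if_distrib[of "\<lambda>x. _ * x"] cong: if_cong)
    finally show ?thesis by simp
  qed
  have first: "P l 0 \<noteq> 0" if l: "l < n" for l
  proof
    assume "P l 0 = 0"
    hence V0: "V l 0 = 0" using s0[OF l] unfolding P_def by simp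
    obtain n' where n': "n = Suc n'" using l by (cases n) auto
    have mB: "minor0 B \<in> carrier_mat n' n'" using B n' by (simp add: minor0_def)
    have "eigenvalue (minor0 B) (lam l)"
    proof (rule eigen_fun_rev[OF mB, of "\<lambda>i. V l (Suc i)"])
      show "\<forall>i<n'. (\<Sum>j<n'. minor0 B $$ (i, j) * V l (Suc j)) = lam l * V l (Suc i)"
      proof (intro allI impI)
        fix i assume i: "i < n'"
        have "(\<Sum>j<n'. minor0 B $$ (i, j) * V l (Suc j)) = (\<Sum>j<n'. B $$ (Suc i, Suc j) * V l (Suc j))"
          using i B n' by (simp add: minor0_def)
        also have "\<dots> = (\<Sum>j<n. B $$ (Suc i, j) * V l j)"
          unfolding n' sum.lessThan_Suc_shift using V0 by simp
        also have "\<dots> = lam l * V l (Suc i)" using Veq l i n' by simp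
        finally show "(\<Sum>j<n'. minor0 B $$ (i, j) * V l (Suc j)) = lam l * V l (Suc i)" .
      qed
      obtain i where i: "i < n" "V l i \<noteq> 0" using V l by auto
      then obtain i' where "i = Suc i'" using V0 by (cases i) auto
      thus "\<exists>i<n'. V l (Suc i) \<noteq> 0" using i n' by auto
    qed
    hence "poly (char_poly (minor0 B)) (lam l) = 0" using eigenvalue_root_char_poly[OF mB] by simp
    hence "resultant (char_poly B) (char_poly (minor0 B)) = 0"
      using res_zero_iff[OF cp0] root[OF l] cp_def by auto
    with r2 show False by simp
  qed
  show ?thesis using cols first recon by blast
qed


lemma base_key:
  fixes P :: "nat \<Rightarrow> nat \<Rightarrow> complex" and d :: "nat \<Rightarrow> complex"
  assumes orthC: "\<And>i j. i < n \<Longrightarrow> j < n \<Longrightarrow> (\<Sum>k<n. P k i * P k j) = (if i = j then 1 else 0)"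
    and orthR: "\<And>l m. l < n \<Longrightarrow> m < n \<Longrightarrow> (\<Sum>k<n. P l k * P m k) = (if l = m then 1 else 0)"
    and m: "m < n"
  shows "(\<Sum>i<n. P m i * ((\<Sum>j<n. (\<Sum>k<n. d k * P k i * P k j) * u j) - x * u i))
          = (d m - x) * (\<Sum>j<n. P m j * u j)"
proof -
  have "(\<Sum>i<n. P m i * (\<Sum>j<n. (\<Sum>k<n. d k * P k i * P k j) * u j))
      = (\<Sum>k<n. d k * (\<Sum>i<n. P m i * P k i) * (\<Sum>j<n. P k j * u j))"
  proof -
    have "(\<Sum>i<n. P m i * (\<Sum>j<n. (\<Sum>k<n. d k * P k i * P k j) * u j))
        = (\<Sum>i<n. \<Sum>j<n. \<Sum>k<n. d k * (P m i * P k i) * (P k j * u j))"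
      by (simp add: sum_distrib_left sum_distrib_right mult_ac)
    also have "\<dots> = (\<Sum>i<n. \<Sum>k<n. \<Sum>j<n. d k * (P m i * P k i) * (P k j * u j))"
      by (rule sum.cong[OF refl], rule sum.swap)
    also have "\<dots> = (\<Sum>k<n. \<Sum>i<n. \<Sum>j<n. d k * (P m i * P k i) * (P k j * u j))"
      by (rule sum.swap)
    also have "\<dots> = (\<Sum>k<n. d k * (\<Sum>i<n. P m i * P k i) * (\<Sum>j<n. P k j * u j))"
      by (simp add: sum_distrib_left sum_distrib_right mult_ac)
    finally show ?thesis .
  qed
  also have "\<dots> = (\<Sum>k<n. if k = m then d m * (\<Sum>j<n. P m j * u j) else 0)"
    using orthR m by (intro sum.cong refl) auto
  also have "\<dots> = d m * (\<Sum>j<n. P m j * u j)" using m by simp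
  finally have A: "(\<Sum>i<n. P m i * (\<Sum>j<n. (\<Sum>k<n. d k * P k i * P k j) * u j)) = d m * (\<Sum>j<n. P m j * u j)" .
  have B: "(\<Sum>i<n. P m i * ((\<Sum>j<n. (\<Sum>k<n. d k * P k i * P k j) * u j) - x * u i))
     = (\<Sum>i<n. P m i * (\<Sum>j<n. (\<Sum>k<n. d k * P k i * P k j) * u j)) - x * (\<Sum>j<n. P m j * u j)"
    unfolding right_diff_distrib sum_subtractf by (simp add: sum_distrib_left mult_ac)
  show ?thesis unfolding B A by (simp add: algebra_simps)
qed

lemma recover:
  fixes P :: "nat \<Rightarrow> nat \<Rightarrow> complex"
  assumes orthC: "\<And>i j. i < n \<Longrightarrow> j < n \<Longrightarrow> (\<Sum>k<n. P k i * P k j) = (if i = j then 1 else 0)"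
    and i: "i < n"
  shows "u i = (\<Sum>m<n. P m i * (\<Sum>j<n. P m j * u j))"
proof -
  have "(\<Sum>m<n. P m i * (\<Sum>j<n. P m j * u j)) = (\<Sum>j<n. (\<Sum>m<n. P m i * P m j) * u j)"
  proof -
    have "(\<Sum>m<n. P m i * (\<Sum>j<n. P m j * u j)) = (\<Sum>m<n. \<Sum>j<n. P m i * P m j * u j)"
      by (simp add: sum_distrib_left mult_ac)
    also have "\<dots> = (\<Sum>j<n. \<Sum>m<n. P m i * P m j * u j)" by (rule sum.swap)
    finally show ?thesis by (simp add: sum_distrib_right)
  qed
  also have "\<dots> = (\<Sum>j<n. if i = j then u j else 0)" using orthC i by (intro sum.cong refl) auto
  also have "\<dots> = u i" using i by simp
  finally show ?thesis by simp
qed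


lemma base_good:
  fixes P :: "nat \<Rightarrow> nat \<Rightarrow> complex" and d :: "nat \<Rightarrow> complex"
  assumes orthC: "\<And>i j. i < n \<Longrightarrow> j < n \<Longrightarrow> (\<Sum>k<n. P k i * P k j) = (if i = j then 1 else 0)"
    and orthR: "\<And>l m. l < n \<Longrightarrow> m < n \<Longrightarrow> (\<Sum>k<n. P l k * P m k) = (if l = m then 1 else 0)"
    and inj: "inj_on d {..<n}" and first: "\<forall>l<n. P l 0 \<noteq> 0"
    and C: "C = mat n n (\<lambda>(i,j). \<Sum>k<n. d k * P k i * P k j)"
  shows "resultant (char_poly C) (pderiv (char_poly C)) \<noteq> 0 \<and> resultant (char_poly C) (char_poly (minor0 C)) \<noteq> 0"
proof -
  have Cc: "C \<in> carrier_mat n n" using C by simp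
  define cp where "cp = char_poly C"
  have dcp: "degree cp = n" "coeff cp n = 1" using degree_monic_char_poly[OF Cc] cp_def by auto
  have cp0: "cp \<noteq> 0" using dcp by auto
  have Cij: "C $$ (i,j) = (\<Sum>k<n. d k * P k i * P k j)" if "i < n" "j < n" for i j using C that by simp
  have Csum: "(\<Sum>j<n. C $$ (i,j) * u j) = (\<Sum>j<n. (\<Sum>k<n. d k * P k i * P k j) * u j)" if "i < n" for i u
    using Cij that by (intro sum.cong refl) auto
  have roots: "{x. poly cp x = 0} = d ` {..<n}"
  proof (rule subset_antisym; rule subsetI)
    fix x assume "x \<in> {x. poly cp x = 0}"
    hence "eigenvalue C x" using eigenvalue_root_char_poly[OF Cc] cp_def by simp
    then obtain u where u: "\<forall>i<n. (\<Sum>j<n. C $$ (i,j) * u j) = x * u i" "\<exists>i<n. u i \<noteq> 0"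
      using eigen_fun[OF Cc] by blast
    show "x \<in> d ` {..<n}"
    proof (rule ccontr)
      assume nx: "x \<notin> d ` {..<n}"
      have z: "(\<Sum>j<n. P m j * u j) = 0" if m: "m < n" for m
      proof -
        have "(d m - x) * (\<Sum>j<n. P m j * u j) = (\<Sum>i<n. P m i * ((\<Sum>j<n. (\<Sum>k<n. d k * P k i * P k j) * u j) - x * u i))"
          using base_key[OF orthC orthR m] by simp
        also have "\<dots> = 0" using u(1) Csum by (intro sum.neutral ballI) auto
        finally show ?thesis using nx m by auto
      qed
      have "u i = 0" if "i < n" for i using recover[OF orthC that, of u] z by simp
      with u(2) show False by auto
    qed
  next
    fix x assume "x \<in> d ` {..<n}"
    then obtain m where m: "m < n" "x = d m" by auto
    have "eigenvalue C x"
    proof (rule eigen_fun_rev[OF Cc, of "P m"])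
      show "\<forall>i<n. (\<Sum>j<n. C $$ (i,j) * P m j) = x * P m i"
      proof (intro allI impI)
        fix i assume i: "i < n"
        have "(\<Sum>j<n. C $$ (i,j) * P m j) = (\<Sum>j<n. (\<Sum>k<n. d k * P k i * P k j) * P m j)"
          using Csum[OF i] .
        also have "\<dots> = (\<Sum>k<n. d k * P k i * (\<Sum>j<n. P k j * P m j))"
        proof -
          have "(\<Sum>j<n. (\<Sum>k<n. d k * P k i * P k j) * P m j) = (\<Sum>j<n. \<Sum>k<n. d k * P k i * (P k j * P m j))"
            by (simp add: sum_distrib_right sum_distrib_left mult_ac)
          also have "\<dots> = (\<Sum>k<n. \<Sum>j<n. d k * P k i * (P k j * P m j))" by (rule sum.swap)
          finally show ?thesis by (simp add: sum_distrib_left)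
        qed
        also have "\<dots> = (\<Sum>k<n. if k = m then d m * P m i else 0)"
          using orthR m by (intro sum.cong refl) auto
        also have "\<dots> = x * P m i" using m by simp
        finally show "(\<Sum>j<n. C $$ (i,j) * P m j) = x * P m i" .
      qed
      show "\<exists>i<n. P m i \<noteq> 0" using first m by (intro exI[of _ 0]) auto
    qed
    thus "x \<in> {x. poly cp x = 0}" using eigenvalue_root_char_poly[OF Cc] cp_def by simp
  qed
  have "card {x. poly cp x = 0} = n" unfolding roots using card_image[OF inj] by simp
  hence "rsquarefree cp" using rsquarefree_card_degree[OF cp0] dcp by simp
  hence r1: "resultant cp (pderiv cp) \<noteq> 0"
    unfolding rsquarefree_roots using res_zero_iff[OF cp0] by auto
  have r2: "resultant cp (char_poly (minor0 C)) \<noteq> 0"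
  proof
    assume "resultant cp (char_poly (minor0 C)) = 0"
    then obtain a where a: "poly cp a = 0" "poly (char_poly (minor0 C)) a = 0"
      using res_zero_iff[OF cp0] by auto
    from a(1) roots obtain l where l: "l < n" "a = d l" by auto
    obtain n' where n': "n = Suc n'" using l by (cases n) auto
    have mC: "minor0 C \<in> carrier_mat n' n'" using Cc n' by (simp add: minor0_def)
    have "eigenvalue (minor0 C) a" using a(2) eigenvalue_root_char_poly[OF mC] by simp
    then obtain w where w: "\<forall>i<n'. (\<Sum>j<n'. minor0 C $$ (i,j) * w j) = a * w i" "\<exists>i<n'. w i \<noteq> 0"
      using eigen_fun[OF mC] by blast
    define u where "u j = (if j = 0 then 0 else w (j - 1))" for j
    define y where "y i = (\<Sum>j<n. (\<Sum>k<n. d k * P k i * P k j) * u j) - a * u i" for i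
    have y: "y (Suc i) = 0" if i: "i < n'" for i
    proof -
      have "(\<Sum>j<n. (\<Sum>k<n. d k * P k (Suc i) * P k j) * u j) = (\<Sum>j<n. C $$ (Suc i,j) * u j)"
        using Csum[of "Suc i" u] i n' by simp
      also have "\<dots> = (\<Sum>j<n'. C $$ (Suc i, Suc j) * w j)"
        unfolding n' sum.lessThan_Suc_shift by (simp add: u_def)
      also have "\<dots> = (\<Sum>j<n'. minor0 C $$ (i,j) * w j)"
        using Cc n' i by (intro sum.cong refl) (simp add: minor0_def)
      also have "\<dots> = a * u (Suc i)" using w(1) i by (simp add: u_def)
      finally show ?thesis unfolding y_def by simp
    qed
    have key: "(\<Sum>i<n. P m i * y i) = (d m - a) * (\<Sum>j<n. P m j * u j)" if m: "m < n" for m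
      unfolding y_def using base_key[OF orthC orthR m] by simp
    have key2: "(\<Sum>i<n. P m i * y i) = P m 0 * y 0" for m
      unfolding n' sum.lessThan_Suc_shift using y by simp
    have "P l 0 * y 0 = 0" using key[OF l(1)] key2[of l] l by simp
    hence y0: "y 0 = 0" using first l by simp
    have zm: "(\<Sum>j<n. P m j * u j) = 0" if m: "m < n" "m \<noteq> l" for m
    proof -
      have "d m \<noteq> a" using inj_onD[OF inj, of m l] m l by auto
      moreover have "(d m - a) * (\<Sum>j<n. P m j * u j) = 0" using key[OF m(1)] key2[of m] y0 by simp
      ultimately show ?thesis by simp
    qed
    have "u 0 = (\<Sum>m<n. P m 0 * (\<Sum>j<n. P m j * u j))" using recover[OF orthC, of 0 u] n' by simp
    also have "\<dots> = (\<Sum>m<n. if m = l then P l 0 * (\<Sum>j<n. P l j * u j) else 0)"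
      using zm by (intro sum.cong refl) auto
    also have "\<dots> = P l 0 * (\<Sum>j<n. P l j * u j)" using l by simp
    finally have "P l 0 * (\<Sum>j<n. P l j * u j) = 0" by (simp add: u_def)
    hence zl: "(\<Sum>j<n. P l j * u j) = 0" using first l by simp
    have "u i = 0" if "i < n" for i
    proof -
      have "u i = (\<Sum>m<n. P m i * (\<Sum>j<n. P m j * u j))" using recover[OF orthC that] .
      also have "\<dots> = 0" using zm zl by (intro sum.neutral ballI) (metis lessThan_iff mult_zero_right)
      finally show ?thesis .
    qed
    moreover obtain i where "i < n'" "w i \<noteq> 0" using w(2) by auto
    ultimately show False using n' by (metis Suc_less_eq diff_Suc_1 nat.distinct(1) u_def)
  qed
  show ?thesis using r1 r2 cp_def by simp
qed

definition hw :: "nat \<Rightarrow> complex" where "hw i = (if i = 0 then 1 else 2)"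
definition hS :: "nat \<Rightarrow> complex" where "hS n = (\<Sum>k<n. hw k * hw k)"
definition hP :: "nat \<Rightarrow> nat \<Rightarrow> nat \<Rightarrow> complex" where
  "hP n i j = (if i = j then 1 else 0) - 2 / hS n * hw i * hw j"

lemma hS_val: "n = Suc n' \<Longrightarrow> hS n = 1 + 4 * of_nat n'"
  unfolding hS_def by (simp only: sum.lessThan_Suc_shift) (simp add: hw_def)

lemma hS_nz: "0 < n \<Longrightarrow> hS n \<noteq> 0"
proof -
  assume "0 < n"
  then obtain n' where n': "n = Suc n'" by (cases n) auto
  have "hS n = of_real (1 + 4 * real n')" using hS_val[OF n'] by simp
  moreover have "1 + 4 * real n' \<noteq> 0" by simp
  ultimately show ?thesis by (metis of_real_eq_0_iff)
qed

lemma hP_orth: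
  assumes i: "i < n" and j: "j < n"
  shows "(\<Sum>k<n. hP n k i * hP n k j) = (if i = j then 1 else 0)"
proof -
  define c where "c = 2 / hS n"
  have S: "c * hS n = 2" using hS_nz[of n] i by (simp add: c_def)
  have pt: "hP n k i * hP n k j = (if k = i \<and> k = j then 1 else 0) - (if k = i then c * hw i * hw j else 0)
       - (if k = j then c * hw i * hw j else 0) + c * c * hw i * hw j * (hw k * hw k)" for k
    by (auto simp: hP_def c_def algebra_simps)
  have dd: "(\<Sum>k<n. if k = i \<and> k = j then 1 else 0) = (if i = j then 1 else (0::complex))"
    using i by (cases "i = j") (auto intro: sum.neutral)
  have "(\<Sum>k<n. hP n k i * hP n k j) = (if i = j then 1 else 0) - c * hw i * hw j - c * hw i * hw j
        + c * c * hw i * hw j * hS n"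
    unfolding pt using i j dd
    by (simp add: sum.distrib sum_subtractf sum_distrib_left[symmetric] hS_def)
  also have "\<dots> = (if i = j then 1 else 0) + c * hw i * hw j * (c * hS n - 2)" by (simp add: algebra_simps)
  also have "\<dots> = (if i = j then 1 else 0)" using S by simp
  finally show ?thesis .
qed

lemma hP_sym: "hP n i j = hP n j i" by (simp add: hP_def mult_ac)

lemma hP_first:
  assumes l: "l < n" shows "hP n l 0 \<noteq> 0"
proof -
  obtain n' where n': "n = Suc n'" using l by (cases n) auto
  have S: "hS n = of_real (1 + 4 * real n')" using hS_val[OF n'] by simp
  have S0: "hS n \<noteq> 0" using hS_nz[of n] l by simp
  show ?thesis
  proof (cases "l = 0")
    case True
    have "hP n l 0 = (hS n - 2) / hS n" using True S0 by (simp add: hP_def hw_def field_simps)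
    moreover have "hS n - 2 = of_real (4 * real n' - 1)" using S by simp
    moreover have "4 * real n' - 1 \<noteq> 0" by (cases n') auto
    ultimately show ?thesis using S0 by (simp only: of_real_eq_0_iff divide_eq_0_iff) simp
  next
    case False
    thus ?thesis using S0 by (simp add: hP_def hw_def)
  qed
qed




definition baseC :: "nat \<Rightarrow> complex mat" where
  "baseC n = mat n n (\<lambda>(i,j). \<Sum>k<n. of_nat k * hP n k i * hP n k j)"

lemma baseC_good:
  "resultant (char_poly (baseC n)) (pderiv (char_poly (baseC n))) \<noteq> 0 \<and>
   resultant (char_poly (baseC n)) (char_poly (minor0 (baseC n))) \<noteq> 0"
proof (rule base_good[where P = "hP n" and d = of_nat])
  show "\<And>i j. i < n \<Longrightarrow> j < n \<Longrightarrow> (\<Sum>k<n. hP n k i * hP n k j) = (if i = j then 1 else 0)"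
    by (rule hP_orth)
  show "\<And>l m. l < n \<Longrightarrow> m < n \<Longrightarrow> (\<Sum>k<n. hP n l k * hP n m k) = (if l = m then 1 else 0)"
  proof -
    fix l m assume lm: "l < n" "m < n"
    have "(\<Sum>k<n. hP n l k * hP n m k) = (\<Sum>k<n. hP n k l * hP n k m)"
      by (intro sum.cong refl) (metis hP_sym)
    thus "(\<Sum>k<n. hP n l k * hP n m k) = (if l = m then 1 else 0)" using hP_orth[OF lm] by simp
  qed
  show "inj_on (of_nat :: nat \<Rightarrow> complex) {..<n}" by (auto simp: inj_on_def)
  show "\<forall>l<n. hP n l 0 \<noteq> 0" using hP_first by auto
qed (simp add: baseC_def)

lemma approx:
  fixes M :: "complex mat"
  assumes M: "M \<in> carrier_mat n n" and sym: "\<forall>i<n. \<forall>j<n. M $$ (i,j) = M $$ (j,i)" and e: "\<epsilon> > 0"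
  shows "\<exists>B. B \<in> carrier_mat n n \<and> (\<forall>i<n. \<forall>j<n. B $$ (i,j) = B $$ (j,i)) \<and>
     resultant (char_poly B) (pderiv (char_poly B)) \<noteq> 0 \<and>
     resultant (char_poly B) (char_poly (minor0 B)) \<noteq> 0 \<and>
     (\<Sum>i<n. \<Sum>j<n. cmod (B $$ (i,j) - M $$ (i,j))) < \<epsilon>"
proof -
  define C where "C = baseC n"
  have Cc: "C \<in> carrier_mat n n" by (simp add: C_def baseC_def)
  have Csym: "C $$ (i,j) = C $$ (j,i)" if "i < n" "j < n" for i j
    using that by (simp add: C_def baseC_def mult_ac)
  define Np where "Np = mat n n (\<lambda>(i,j). [: C $$ (i,j), M $$ (i,j) - C $$ (i,j) :])"
  have Npc: "Np \<in> carrier_mat n n" by (simp add: Np_def)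
  define Ns where "Ns s = mat n n (\<lambda>(i,j). C $$ (i,j) + s * (M $$ (i,j) - C $$ (i,j)))" for s
  have Nsc: "Ns s \<in> carrier_mat n n" for s by (simp add: Ns_def)
  have Ns_map: "Ns s = map_mat (\<lambda>p. poly p s) Np" for s
    by (rule eq_matI) (auto simp: Ns_def Np_def)
  have minor_map: "minor0 (Ns s) = map_mat (\<lambda>p. poly p s) (minor0 Np)" for s
    by (rule eq_matI) (auto simp: Ns_def Np_def minor0_def)
  have mNpc: "minor0 Np \<in> carrier_mat (n - 1) (n - 1)" by (simp add: minor0_def Np_def)
  have mNsc: "minor0 (Ns s) \<in> carrier_mat (n - 1) (n - 1)" for s by (simp add: minor0_def Ns_def)
  define cpN where "cpN = char_poly Np"
  define R where "R = resultant cpN (pderiv cpN) * resultant cpN (char_poly (minor0 Np))"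
  have evalR: "poly R s = resultant (char_poly (Ns s)) (pderiv (char_poly (Ns s))) *
                 resultant (char_poly (Ns s)) (char_poly (minor0 (Ns s)))" for s
  proof -
    have hom: "comm_ring_hom (\<lambda>p. poly p s)" by unfold_locales auto
    have c1: "char_poly (Ns s) = map_poly (\<lambda>p. poly p s) cpN"
      unfolding Ns_map cpN_def by (rule poly_hom.char_poly_hom[OF Npc])
    have c2: "char_poly (minor0 (Ns s)) = map_poly (\<lambda>p. poly p s) (char_poly (minor0 Np))"
      unfolding minor_map by (rule poly_hom.char_poly_hom[OF mNpc])
    have c3: "pderiv (char_poly (Ns s)) = map_poly (\<lambda>p. poly p s) (pderiv cpN)"
      unfolding c1 by (rule poly_hom.map_poly_pderiv[symmetric])
    have d1: "degree (char_poly (Ns s)) = n" "degree cpN = n"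
      using degree_monic_char_poly[OF Nsc] degree_monic_char_poly[OF Npc] cpN_def by auto
    have d2: "degree (char_poly (minor0 (Ns s))) = n - 1" "degree (char_poly (minor0 Np)) = n - 1"
      using degree_monic_char_poly[OF mNsc] degree_monic_char_poly[OF mNpc] by auto
    have d3: "degree (pderiv (char_poly (Ns s))) = n - 1" "degree (pderiv cpN) = n - 1"
      using d1 by (simp_all add: degree_pderiv)
    have "resultant (char_poly (Ns s)) (pderiv (char_poly (Ns s))) = poly (resultant cpN (pderiv cpN)) s"
      unfolding c3 unfolding c1 by (rule comm_ring_hom.resultant_map_poly[OF hom]) (use d1 d3 c1 c3 in auto)
    moreover have "resultant (char_poly (Ns s)) (char_poly (minor0 (Ns s))) = poly (resultant cpN (char_poly (minor0 Np))) s"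
      unfolding c2 unfolding c1 by (rule comm_ring_hom.resultant_map_poly[OF hom]) (use d1 d2 c1 c2 in auto)
    ultimately show ?thesis unfolding R_def by simp
  qed
  have N0: "Ns 0 = C" by (rule eq_matI) (use Cc in \<open>auto simp: Ns_def\<close>)
  have "poly R 0 \<noteq> 0" unfolding evalR N0 using baseC_good C_def by simp
  hence R0: "R \<noteq> 0" by auto
  define T where "T = (\<Sum>i<n. \<Sum>j<n. cmod (M $$ (i,j) - C $$ (i,j)))"
  have T0: "T \<ge> 0" unfolding T_def by (intro sum_nonneg) auto
  define \<delta> where "\<delta> = \<epsilon> / (T + 1)"
  have \<delta>0: "\<delta> > 0" using e T0 by (simp add: \<delta>_def)
  define sq where "sq k = complex_of_real (1 - \<delta> / (real k + 2))" for k
  have "inj sq"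
  proof (rule injI)
    fix a b assume "sq a = sq b"
    hence "\<delta> / (real a + 2) = \<delta> / (real b + 2)" by (simp add: sq_def)
    thus "a = b" using \<delta>0 by (simp add: field_simps)
  qed
  hence "infinite (range sq)" by (rule range_inj_infinite)
  moreover have "finite {x. poly R x = 0}" by (rule poly_roots_finite[OF R0])
  ultimately have "\<not> range sq \<subseteq> {x. poly R x = 0}" using finite_subset by blast
  then obtain k where k: "poly R (sq k) \<noteq> 0" by auto
  define B where "B = Ns (sq k)"
  have Bc: "B \<in> carrier_mat n n" by (simp add: B_def Nsc)
  have Bsym: "\<forall>i<n. \<forall>j<n. B $$ (i,j) = B $$ (j,i)"
  proof (intro allI impI)
    fix i j assume ij: "i < n" "j < n"
    have "M $$ (i,j) = M $$ (j,i)" "C $$ (i,j) = C $$ (j,i)" using sym ij Csym[OF ij] by blast+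
    thus "B $$ (i,j) = B $$ (j,i)" using ij by (simp add: B_def Ns_def)
  qed
  have res: "resultant (char_poly B) (pderiv (char_poly B)) \<noteq> 0"
            "resultant (char_poly B) (char_poly (minor0 B)) \<noteq> 0"
    using k unfolding evalR B_def by auto
  have close: "cmod (B $$ (i,j) - M $$ (i,j)) = \<delta> / (real k + 2) * cmod (M $$ (i,j) - C $$ (i,j))"
    if "i < n" "j < n" for i j
  proof -
    define t where "t = \<delta> / (real k + 2)"
    have "B $$ (i,j) - M $$ (i,j) = - (complex_of_real t * (M $$ (i,j) - C $$ (i,j)))"
      using that by (simp add: B_def Ns_def sq_def t_def algebra_simps)
    hence "cmod (B $$ (i,j) - M $$ (i,j)) = \<bar>t\<bar> * cmod (M $$ (i,j) - C $$ (i,j))"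
      by (simp only: norm_minus_cancel norm_mult norm_of_real)
    moreover have "\<bar>t\<bar> = t" using \<delta>0 by (simp add: t_def)
    ultimately show ?thesis unfolding t_def by simp
  qed
  have "(\<Sum>i<n. \<Sum>j<n. cmod (B $$ (i,j) - M $$ (i,j))) = \<delta> / (real k + 2) * T"
    unfolding T_def sum_distrib_left using close by (intro sum.cong refl) auto
  also have "\<dots> \<le> \<delta> / 2 * T"
    using T0 \<delta>0 by (intro mult_right_mono divide_left_mono) auto
  also have "\<dots> < \<epsilon>"
  proof -
    have q: "T / (T + 1) < 1" using T0 by simp
    have "\<delta> * T = \<epsilon> * (T / (T + 1))" by (simp add: \<delta>_def)
    also have "\<dots> < \<epsilon> * 1" using q e by (intro mult_strict_left_mono) auto
    finally have "\<delta> * T < \<epsilon>" by simp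
    thus ?thesis using e by simp
  qed
  finally have fin: "(\<Sum>i<n. \<Sum>j<n. cmod (B $$ (i,j) - M $$ (i,j))) < \<epsilon>" .
  show ?thesis
    apply (rule exI[of _ B])
    using Bc Bsym res fin by (intro conjI)
qed


lemma core:
  fixes M :: "complex mat"
  assumes M: "M \<in> carrier_mat n n" and sym: "\<forall>i<n. \<forall>j<n. M $$ (i,j) = M $$ (j,i)" and e: "\<epsilon> > 0"
  shows "\<exists>P lam. (\<forall>i<n. \<forall>j<n. (\<Sum>k<n. P k i * P k j) = (if i = j then 1 else 0))
           \<and> (\<forall>l<n. P l 0 \<noteq> 0)
           \<and> (\<Sum>i<n. \<Sum>j<n. cmod ((\<Sum>l<n. lam l * P l i * P l j) - M $$ (i,j))) < \<epsilon>"
proof -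
  obtain B where B: "B \<in> carrier_mat n n" "\<forall>i<n. \<forall>j<n. B $$ (i,j) = B $$ (j,i)"
     "resultant (char_poly B) (pderiv (char_poly B)) \<noteq> 0"
     "resultant (char_poly B) (char_poly (minor0 B)) \<noteq> 0"
     "(\<Sum>i<n. \<Sum>j<n. cmod (B $$ (i,j) - M $$ (i,j))) < \<epsilon>"
    using approx[OF M sym e] by blast
  obtain P lam where P: "\<forall>i<n. \<forall>j<n. (\<Sum>k<n. P k i * P k j) = (if i = j then 1 else 0)"
    "\<forall>l<n. P l 0 \<noteq> 0" "\<forall>i<n. \<forall>j<n. B $$ (i,j) = (\<Sum>l<n. lam l * P l i * P l j)"
    using diag_core[OF B(1-4)] by blast
  have "(\<Sum>i<n. \<Sum>j<n. cmod ((\<Sum>l<n. lam l * P l i * P l j) - M $$ (i,j)))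
      = (\<Sum>i<n. \<Sum>j<n. cmod (B $$ (i,j) - M $$ (i,j)))"
    using P(3) by (intro sum.cong refl) auto
  thus ?thesis using P(1,2) B(5) by (intro exI[of _ P] exI[of _ lam]) simp
qed



lemma cube_sum:
  fixes f :: "'a \<Rightarrow> complex"
  shows "(\<Sum>i\<in>U. f i) ^ 3 = (\<Sum>i\<in>U. \<Sum>j\<in>U. \<Sum>k\<in>U. f i * f j * f k)"
proof -
  have "(\<Sum>i\<in>U. f i) ^ 3 = (\<Sum>i\<in>U. f i) * ((\<Sum>j\<in>U. f j) * (\<Sum>k\<in>U. f k))"
    by (simp add: power3_eq_cube mult.assoc)
  also have "\<dots> = (\<Sum>i\<in>U. f i) * (\<Sum>j\<in>U. \<Sum>k\<in>U. f j * f k)"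
    by (simp only: sum_product)
  also have "\<dots> = (\<Sum>i\<in>U. \<Sum>j\<in>U. f i * (\<Sum>k\<in>U. f j * f k))"
    by (simp only: sum_product)
  also have "\<dots> = (\<Sum>i\<in>U. \<Sum>j\<in>U. \<Sum>k\<in>U. f i * f j * f k)"
    by (simp add: sum_distrib_left mult.assoc)
  finally show ?thesis .
qed

lemma norm_vec_le_sum:
  fixes x :: "'a::real_normed_vector ^ 'n"
  shows "norm x \<le> (\<Sum>i\<in>UNIV. norm (x $ i))"
  unfolding norm_vec_def by (rule L2_set_le_sum) auto

theorem proposition14:
  shows "{M :: complex ^ ('n::{finite,wellorder}) ^ ('n::{finite,wellorder}). transpose M = M}
           \<subseteq> closure (first_slice ` (OW :: (complex ^ ('n::{finite,wellorder}) ^ ('n::{finite,wellorder}) ^ ('n::{finite,wellorder})) set))"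
proof
  fix M
  assume "M \<in> {M :: complex ^ ('n::{finite,wellorder}) ^ ('n::{finite,wellorder}). transpose M = M}"
  hence Msym: "M $ i $ j = M $ j $ i" for i j
    by (metis (mono_tags, lifting) mem_Collect_eq transpose_def vec_lambda_beta)
  define n where "n = CARD('n)"
  define xs where "xs = sorted_list_of_set (UNIV :: ('n::{finite,wellorder}) set)"
  have len: "length xs = n" by (simp add: xs_def n_def)
  have bij: "bij_betw ((!) xs) {..<n} UNIV"
    using bij_betw_nth[of xs "{..<n}" UNIV] len by (simp add: xs_def)
  define ix where "ix = inv_into {..<n} ((!) xs)"
  have ix1: "ix (xs ! k) = k" if "k < n" for k
    using bij that unfolding ix_def by (simp add: bij_betw_def inv_into_f_f)
  have ix2: "xs ! (ix a) = a" for a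
    using bij unfolding ix_def by (simp add: bij_betw_def f_inv_into_f)
  have ixn: "ix a < n" for a
    using bij unfolding ix_def by (metis bij_betw_def inv_into_into lessThan_iff UNIV_I)
  define z where "z = (LEAST k::('n::{finite,wellorder}). True)"
  have xs0: "xs ! 0 = z"
  proof -
    have "xs = Min UNIV # sorted_list_of_set (UNIV - {Min UNIV})"
      unfolding xs_def by (rule sorted_list_of_set_nonempty) auto
    moreover have "z = Min UNIV" unfolding z_def using Least_Min[of "\<lambda>_::('n::{finite,wellorder}). True"] by simp
    ultimately show ?thesis by simp
  qed
  have iz: "ix z = 0" using ix1[of 0] xs0 len n_def by auto
  have reidx: "(\<Sum>a\<in>UNIV. g a) = (\<Sum>k<n. g (xs ! k))" for g :: "('n::{finite,wellorder}) \<Rightarrow> complex"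
    using sum.reindex_bij_betw[OF bij, of g] by simp
  have reidxr: "(\<Sum>a\<in>UNIV. g a) = (\<Sum>k<n. g (xs ! k))" for g :: "('n::{finite,wellorder}) \<Rightarrow> real"
    using sum.reindex_bij_betw[OF bij, of g] by simp
  define MJ where "MJ = mat n n (\<lambda>(i,j). M $ (xs ! i) $ (xs ! j))"
  have MJc: "MJ \<in> carrier_mat n n" by (simp add: MJ_def)
  have MJs: "\<forall>i<n. \<forall>j<n. MJ $$ (i,j) = MJ $$ (j,i)" by (simp add: MJ_def Msym)
  show "M \<in> closure (first_slice ` OW)"
    unfolding closure_approachable
  proof (intro allI impI)
    fix e :: real assume e: "e > 0"
    obtain P lam where P: "\<forall>i<n. \<forall>j<n. (\<Sum>k<n. P k i * P k j) = (if i = j then 1 else 0)"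
      "\<forall>l<n. P l 0 \<noteq> 0"
      "(\<Sum>i<n. \<Sum>j<n. cmod ((\<Sum>l<n. lam l * P l i * P l j) - MJ $$ (i,j))) < e"
      using core[OF MJc MJs e] by blast
    define A :: "complex ^ ('n::{finite,wellorder}) ^ ('n::{finite,wellorder})" where "A = (\<chi> l i. P (ix l) (ix i))"
    define \<beta> where "\<beta> l = lam (ix l) / A $ l $ z" for l
    define S :: "complex ^ ('n::{finite,wellorder}) ^ ('n::{finite,wellorder}) ^ ('n::{finite,wellorder})" where
      "S = (\<chi> i j k. \<Sum>l\<in>UNIV. \<beta> l * A $ l $ i * A $ l $ j * A $ l $ k)"
    have Az: "A $ l $ z \<noteq> 0" for l using P(2) ixn iz by (simp add: A_def)
    have "S \<in> OW"
      unfolding OW_def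
    proof (intro CollectI conjI exI[of _ A] exI[of _ \<beta>] allI)
      show "symmetric_tensor S" unfolding symmetric_tensor_def S_def by (simp add: mult_ac)
      show "transpose A ** A = Finite_Cartesian_Product.mat 1"
      proof -
        have *: "(transpose A ** A) $ i $ j = Finite_Cartesian_Product.mat 1 $ i $ j" for i j :: "'n::{finite,wellorder}"
        proof -
        have "(transpose A ** A) $ i $ j = (\<Sum>l\<in>UNIV. A $ l $ i * A $ l $ j)"
          by (simp add: matrix_matrix_mult_def transpose_def)
        also have "\<dots> = (\<Sum>k<n. P k (ix i) * P k (ix j))"
          unfolding reidx by (intro sum.cong refl) (simp add: A_def ix1)
        also have "\<dots> = (if i = j then 1 else 0)" using P(1) ixn
          by (metis ix2)
        finally show "(transpose A ** A) $ i $ j = Finite_Cartesian_Product.mat 1 $ i $ j"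
          by (simp add: Finite_Cartesian_Product.mat_def)
        qed
        thus ?thesis by (simp add: Finite_Cartesian_Product.vec_eq_iff)
      qed
      fix x :: "complex ^ ('n::{finite,wellorder})"
      have "cubic_form S x = (\<Sum>i\<in>UNIV. \<Sum>j\<in>UNIV. \<Sum>k\<in>UNIV. \<Sum>l\<in>UNIV.
              \<beta> l * ((A $ l $ i * x $ i) * (A $ l $ j * x $ j) * (A $ l $ k * x $ k)))"
        unfolding cubic_form_def S_def by (simp add: sum_distrib_right sum_distrib_left mult_ac)
      also have "\<dots> = (\<Sum>l\<in>UNIV. \<Sum>i\<in>UNIV. \<Sum>j\<in>UNIV. \<Sum>k\<in>UNIV.
              \<beta> l * ((A $ l $ i * x $ i) * (A $ l $ j * x $ j) * (A $ l $ k * x $ k)))"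
      proof -
        let ?f = "\<lambda>i j k l. \<beta> l * ((A $ l $ i * x $ i) * (A $ l $ j * x $ j) * (A $ l $ k * x $ k))"
        have "(\<Sum>i\<in>UNIV. \<Sum>j\<in>UNIV. \<Sum>k\<in>UNIV. \<Sum>l\<in>UNIV. ?f i j k l)
            = (\<Sum>i\<in>UNIV. \<Sum>j\<in>UNIV. \<Sum>l\<in>UNIV. \<Sum>k\<in>UNIV. ?f i j k l)"
          apply (rule sum.cong[OF refl])
          apply (rule sum.cong[OF refl])
          by (rule sum.swap)
        also have "\<dots> = (\<Sum>i\<in>UNIV. \<Sum>l\<in>UNIV. \<Sum>j\<in>UNIV. \<Sum>k\<in>UNIV. ?f i j k l)"
          apply (rule sum.cong[OF refl])
          by (rule sum.swap)
        also have "\<dots> = (\<Sum>l\<in>UNIV. \<Sum>i\<in>UNIV. \<Sum>j\<in>UNIV. \<Sum>k\<in>UNIV. ?f i j k l)"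
          by (rule sum.swap)
        finally show ?thesis .
      qed
      also have "\<dots> = (\<Sum>l\<in>UNIV. \<beta> l * ((A *v x) $ l) ^ 3)"
        by (simp add: matrix_vector_mult_def cube_sum sum_distrib_left)
      finally show "cubic_form S x = (\<Sum>l\<in>UNIV. \<beta> l * ((A *v x) $ l) ^ 3)" .
    qed
    moreover have "dist (first_slice S) M < e"
    proof -
      have fs: "first_slice S $ i $ j = (\<Sum>l<n. lam l * P l (ix i) * P l (ix j))" for i j
      proof -
        have "first_slice S $ i $ j = (\<Sum>l\<in>UNIV. \<beta> l * A $ l $ i * A $ l $ j * A $ l $ z)"
          by (simp add: first_slice_def S_def z_def)
        also have "\<dots> = (\<Sum>l\<in>UNIV. lam (ix l) * A $ l $ i * A $ l $ j)"
          using Az by (intro sum.cong refl) (simp add: \<beta>_def)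
        also have "\<dots> = (\<Sum>l<n. lam l * P l (ix i) * P l (ix j))"
          unfolding reidx by (intro sum.cong refl) (simp add: A_def ix1)
        finally show ?thesis .
      qed
      have "dist (first_slice S) M = norm (first_slice S - M)" by (simp add: dist_norm)
      also have "\<dots> \<le> (\<Sum>i\<in>UNIV. norm ((first_slice S - M) $ i))" by (rule norm_vec_le_sum)
      also have "\<dots> \<le> (\<Sum>i\<in>UNIV. \<Sum>j\<in>UNIV. norm (vec_nth (vec_nth (first_slice S - M) i) j))"
        by (intro sum_mono norm_vec_le_sum)
      also have "\<dots> = (\<Sum>i<n. \<Sum>j<n. cmod ((\<Sum>l<n. lam l * P l i * P l j) - MJ $$ (i,j)))"
        unfolding reidxr using len by (intro sum.cong refl) (simp add: fs ix1 MJ_def)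
      also have "\<dots> < e" by (rule P(3))
      finally show ?thesis .
    qed
    ultimately show "\<exists>y\<in>first_slice ` OW. dist y M < e" by blast
  qed
qed


end
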